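(* Let $f:\mathbb{N}^d\to\mathbb{N}$. If there exists an increasing (in the componentwise order) sequence $(\vec{a}_1,\vec{a}_2,\ldots)$ of elements of $\mathbb{N}^d$ such that for all $i<j$ there exists some $\vec{\Delta}_{ij}\in\mathbb{N}^d$ with $f(\vec{a}_i+\vec{\Delta}_{ij})-f(\vec{a}_i)>f(\vec{a}_j+\vec{\Delta}_{ij})-f(\vec{a}_j)$, then $f$ is not obliviously-computable.
   Context: A chemical reaction network (CRN) is a pair $(\mathcal{S},\mathcal{R})$ of a finite set of species and a finite set of reactions $(\vec{R},\vec{P})\in\mathbb{N}^{\mathcal{S}}\times\mathbb{N}^{\mathcal{S}}$. A configuration is $\vec{C}\in\mathbb{N}^{\mathcal{S}}$; a reaction is applicable if $\vec{R}\le\vec{C}$ and yields $\vec{C}-\vec{R}+\vec{P}$; reachability is via finite sequences of applicable reactions. To compute $f:\mathbb{N}^d\to\mathbb{N}$ the CRN has input species $X_1,\ldots,X_d$, output species $Y$, leader species $L$; the initial configuration $\vec{I}_{\vec{x}}$ has $\vec{x}(i)$ copies of $X_i$, one $L$, nothing else. $\vec{C}$ is stable if all configurations reachable from it have the same count of $Y$. The CRN stably computes $f$ if for every $\vec{x}$ and every $\vec{C}$ reachable from $\vec{I}_{\vec{x}}$ some stable $\vec{O}$ reachable from $\vec{C}$ has $\vec{O}(Y)=f(\vec{x})$. The CRN is output-oblivious if $Y$ is never a reactant. $f$ is obliviously-computable if stably computed by an output-oblivious CRN. *)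

theory Defs
  imports Main
begin

definition natvec :: "nat \<Rightarrow> (nat \<Rightarrow> nat) set" where
  "natvec d = {x. \<forall>i\<ge>d. x i = 0}"

(* A CRN over species type 'a, with its input/output/leader species.
   Configurations are 'a => nat (counts; zero outside the species set). *)
record 'a crn =
  species   :: "'a set"
  reactions :: "(('a \<Rightarrow> nat) \<times> ('a \<Rightarrow> nat)) set"
  inp       :: "nat \<Rightarrow> 'a"     (* X_1..X_d are inp 0 .. inp (d-1) *)
  outp      :: "'a"
  leader    :: "'a"

definition wf_crn :: "'a crn \<Rightarrow> nat \<Rightarrow> bool" where
  "wf_crn N d \<longleftrightarrow>
     finite (species N) \<and> finite (reactions N) \<and>
     (\<forall>(R, P) \<in> reactions N. \<forall>s. s \<notin> species N \<longrightarrow> R s = 0 \<and> P s = 0) \<and>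
     inp N ` {..<d} \<subseteq> species N \<and> outp N \<in> species N \<and> leader N \<in> species N \<and>
     inj_on (inp N) {..<d} \<and> outp N \<notin> inp N ` {..<d} \<and>
     leader N \<notin> inp N ` {..<d} \<and> outp N \<noteq> leader N"

definition crn_step :: "'a crn \<Rightarrow> ('a \<Rightarrow> nat) \<Rightarrow> ('a \<Rightarrow> nat) \<Rightarrow> bool" where
  "crn_step N C C' \<longleftrightarrow>
     (\<exists>(R, P) \<in> reactions N. R \<le> C \<and> C' = (\<lambda>s. C s - R s + P s))"

definition reachable :: "'a crn \<Rightarrow> ('a \<Rightarrow> nat) \<Rightarrow> ('a \<Rightarrow> nat) \<Rightarrow> bool" where
  "reachable N = (crn_step N)\<^sup>*\<^sup>*"

definition init_config :: "'a crn \<Rightarrow> nat \<Rightarrow> (nat \<Rightarrow> nat) \<Rightarrow> ('a \<Rightarrow> nat)" where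
  "init_config N d x = (\<lambda>s. (\<Sum>i<d. if s = inp N i then x i else 0) + (if s = leader N then 1 else 0))"

definition stable_config :: "'a crn \<Rightarrow> ('a \<Rightarrow> nat) \<Rightarrow> bool" where
  "stable_config N C \<longleftrightarrow> (\<forall>C'. reachable N C C' \<longrightarrow> C' (outp N) = C (outp N))"

definition stably_computes :: "'a crn \<Rightarrow> nat \<Rightarrow> ((nat \<Rightarrow> nat) \<Rightarrow> nat) \<Rightarrow> bool" where
  "stably_computes N d f \<longleftrightarrow>
     (\<forall>x \<in> natvec d. \<forall>C. reachable N (init_config N d x) C \<longrightarrow>
        (\<exists>E. reachable N C E \<and> stable_config N E \<and> E (outp N) = f x))"

definition output_oblivious :: "'a crn \<Rightarrow> bool" where
  "output_oblivious N \<longleftrightarrow> (\<forall>(R, P) \<in> reactions N. R (outp N) = 0)"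

definition obliviously_computes :: "'a crn \<Rightarrow> nat \<Rightarrow> ((nat \<Rightarrow> nat) \<Rightarrow> nat) \<Rightarrow> bool" where
  "obliviously_computes N d f \<longleftrightarrow> wf_crn N d \<and> output_oblivious N \<and> stably_computes N d f"

end

theory Submission
  imports Defs Complex_Main
begin

lemma nat_mono_sub:
  fixes h :: "nat \<Rightarrow> nat"
  shows "\<exists>\<psi>::nat\<Rightarrow>nat. strict_mono \<psi> \<and> (\<forall>i j. i \<le> j \<longrightarrow> h (\<psi> i) \<le> h (\<psi> j))"
proof -
  obtain \<sigma> where s: "strict_mono \<sigma>" and m: "monoseq (\<lambda>n. h (\<sigma> n))"
    using seq_monosub by blast
  show ?thesis
  proof (cases "incseq (\<lambda>n. h (\<sigma> n))")
    case True
    then show ?thesis using s by (intro exI[where x=\<sigma>]) (auto simp: incseq_def)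
  next
    case False
    then have dec: "decseq (\<lambda>n. h (\<sigma> n))" using m monoseq_iff by blast
    define m0 where "m0 = (LEAST v. \<exists>n. h (\<sigma> n) = v)"
    have "\<exists>n. h (\<sigma> n) = m0" unfolding m0_def by (rule LeastI_ex) blast
    then obtain k where k: "h (\<sigma> k) = m0" by blast
    have le: "m0 \<le> h (\<sigma> n)" for n unfolding m0_def by (rule Least_le) blast
    have c: "h (\<sigma> (n + k)) = m0" for n
      using dec[unfolded decseq_def, rule_format, of k "n+k"] le[of "n+k"] k by simp
    have "strict_mono (\<lambda>n. \<sigma> (n + k))" using s by (simp add: strict_mono_def)
    then show ?thesis using c by (intro exI[where x="\<lambda>n. \<sigma> (n + k)"]) simp
  qed
qed

lemma dickson_sub:
  assumes "finite S"
  shows "\<exists>\<phi>::nat\<Rightarrow>nat. strict_mono \<phi> \<and> (\<forall>i j. i \<le> j \<longrightarrow> (\<forall>s\<in>S. (g (\<phi> i) s :: nat) \<le> g (\<phi> j) s))"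
  using assms
proof (induction S arbitrary: g rule: finite_induct)
  case empty
  then show ?case by (intro exI[where x=id]) (simp add: strict_mono_def)
next
  case (insert x S)
  obtain \<phi> :: "nat \<Rightarrow> nat" where p: "strict_mono \<phi>" "\<forall>i j. i \<le> j \<longrightarrow> (\<forall>s\<in>S. g (\<phi> i) s \<le> g (\<phi> j) s)"
    using insert.IH by blast
  obtain \<psi> :: "nat \<Rightarrow> nat" where q: "strict_mono \<psi>" "\<forall>i j. i \<le> j \<longrightarrow> g (\<phi> (\<psi> i)) x \<le> g (\<phi> (\<psi> j)) x"
    using nat_mono_sub[of "\<lambda>n. g (\<phi> n) x"] by blast
  have "strict_mono (\<phi> \<circ> \<psi>)" using p(1) q(1) by (simp add: strict_mono_def)
  moreover have "\<forall>i j. i \<le> j \<longrightarrow> (\<forall>s\<in>insert x S. g ((\<phi> \<circ> \<psi>) i) s \<le> g ((\<phi> \<circ> \<psi>) j) s)"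
  proof (intro allI impI ballI)
    fix i j s assume ij: "(i::nat) \<le> j" and sS: "s \<in> insert x S"
    have "\<psi> i \<le> \<psi> j" using q(1) ij by (simp add: strict_mono_less_eq)
    then show "g ((\<phi> \<circ> \<psi>) i) s \<le> g ((\<phi> \<circ> \<psi>) j) s"
      using sS p(2) q(2) ij by (cases "s = x") auto
  qed
  ultimately show ?case by blast
qed

lemma support:
  assumes "wf_crn N d" "reachable N C C'" "\<forall>s. s \<notin> species N \<longrightarrow> C s = 0"
  shows "\<forall>s. s \<notin> species N \<longrightarrow> C' s = 0"
  using assms(2,3) unfolding reachable_def
proof (induction rule: rtranclp_induct)
  case base then show ?case by simp
next
  case (step y z)
  obtain R P where RP: "(R, P) \<in> reactions N" "z = (\<lambda>s. y s - R s + P s)"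
    using step.hyps(2) unfolding crn_step_def by blast
  have "\<forall>s. s \<notin> species N \<longrightarrow> R s = 0 \<and> P s = 0"
    using assms(1) RP(1) unfolding wf_crn_def by blast
  then show ?case using RP(2) step.IH step.prems by simp
qed

lemma shift:
  fixes v :: nat and E :: "'a \<Rightarrow> nat" and N :: "'a crn"
  assumes oo: "output_oblivious N" and r: "reachable N C C'"
  shows "C (outp N) \<le> C' (outp N) \<and>
    reachable N (\<lambda>s. if s = outp N then v else C s + E s)
                (\<lambda>s. if s = outp N then v + (C' (outp N) - C (outp N)) else C' s + E s)"
  using r unfolding reachable_def
proof (induction rule: rtranclp_induct)
  case base then show ?case by (simp only: diff_self_eq_0 add_0_right le_refl rtranclp.rtrancl_refl simp_thms)
next
  case (step C1 C2)
  let ?Y = "outp N"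
  obtain R P where RP: "(R, P) \<in> reactions N" "R \<le> C1" "C2 = (\<lambda>s. C1 s - R s + P s)"
    using step.hyps(2) unfolding crn_step_def by blast
  have RY: "R ?Y = 0" using oo RP(1) unfolding output_oblivious_def by blast
  have C2Y: "C2 ?Y = C1 ?Y + P ?Y" using RP(3) RY by simp
  let ?G1 = "\<lambda>s. if s = ?Y then v + (C1 ?Y - C ?Y) else C1 s + E s"
  let ?G2 = "\<lambda>s. if s = ?Y then v + (C2 ?Y - C ?Y) else C2 s + E s"
  have "R \<le> ?G1" using RP(2) RY by (auto simp: le_fun_def trans_le_add1)
  moreover have "?G2 = (\<lambda>s. ?G1 s - R s + P s)"
  proof
    fix s
    have Rs: "R s \<le> C1 s" using RP(2) by (simp add: le_fun_def)
    have CY: "C ?Y \<le> C1 ?Y" using step.IH by blast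
    show "?G2 s = ?G1 s - R s + P s"
    proof (cases "s = ?Y")
      case True
      then show ?thesis using RY C2Y CY by simp
    next
      case False
      have "C2 s = C1 s - R s + P s" using RP(3) by simp
      then show ?thesis using False Rs by simp
    qed
  qed
  ultimately have "crn_step N ?G1 ?G2" using RP(1) unfolding crn_step_def by blast
  then show ?case using step.IH C2Y
    by (auto intro: rtranclp.rtrancl_into_rtrancl)
qed

lemma mono_Y:
  assumes "output_oblivious N" "reachable N C C'"
  shows "C (outp N) \<le> C' (outp N)"
  using shift[OF assms] by blast

lemma reach_add:
  fixes E :: "'a \<Rightarrow> nat" and N :: "'a crn"
  assumes "reachable N C C'"
  shows "reachable N (\<lambda>s. C s + E s) (\<lambda>s. C' s + E s)"
  using assms unfolding reachable_def
proof (induction rule: rtranclp_induct)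
  case base then show ?case by simp
next
  case (step y z)
  obtain R P where RP: "(R, P) \<in> reactions N" "R \<le> y" "z = (\<lambda>s. y s - R s + P s)"
    using step.hyps(2) unfolding crn_step_def by blast
  have "crn_step N (\<lambda>s. y s + E s) (\<lambda>s. z s + E s)"
    unfolding crn_step_def using RP
    by (intro bexI[where x="(R,P)"]) (auto simp: le_fun_def trans_le_add1)
  then show ?case using step.IH by (auto intro: rtranclp.rtrancl_into_rtrancl)
qed

lemma arith_aux: "(b::nat) + (c - a) \<le> e \<Longrightarrow> a \<le> c \<Longrightarrow> int c - int a > int e - int b \<Longrightarrow> False"
  by linarith

theorem lemma9:
  fixes f :: "(nat \<Rightarrow> nat) \<Rightarrow> nat" and d :: nat and a :: "nat \<Rightarrow> nat \<Rightarrow> nat"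
    and N :: "'a crn"
  assumes "\<forall>k. a k \<in> natvec d"
    and "\<forall>i j. i < j \<longrightarrow> a i \<le> a j"
    and "\<forall>i j. i < j \<longrightarrow> (\<exists>D \<in> natvec d.
           int (f (\<lambda>k. a i k + D k)) - int (f (a i)) > int (f (\<lambda>k. a j k + D k)) - int (f (a j)))"
  shows "\<not> obliviously_computes N d f"
proof
  assume oc: "obliviously_computes N d f"
  have wf: "wf_crn N d" and oo: "output_oblivious N" and sc: "stably_computes N d f"
    using oc unfolding obliviously_computes_def by auto
  let ?Y = "outp N"
  let ?I = "init_config N d"
  have "\<forall>i. \<exists>Oc. reachable N (?I (a i)) Oc \<and> Oc ?Y = f (a i)"
    using sc assms(1) unfolding stably_computes_def reachable_def by blast
  then obtain Oc where Oc: "\<And>i. reachable N (?I (a i)) (Oc i)" "\<And>i. Oc i ?Y = f (a i)"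
    by metis
  have initsupp: "\<forall>s. s \<notin> species N \<longrightarrow> ?I x s = 0" for x
    using wf unfolding wf_crn_def init_config_def by (auto intro!: sum.neutral)
  have Osupp: "\<forall>s. s \<notin> species N \<longrightarrow> Oc i s = 0" for i
    using support[OF wf Oc(1) initsupp] .
  have fin: "finite (species N)" using wf unfolding wf_crn_def by blast
  obtain \<phi> :: "nat \<Rightarrow> nat" where \<phi>: "strict_mono \<phi>" "\<forall>i j. i \<le> j \<longrightarrow> (\<forall>s\<in>species N. Oc (\<phi> i) s \<le> Oc (\<phi> j) s)"
    using dickson_sub[OF fin, of Oc] by blast
  define i where "i = \<phi> 0"
  define j where "j = \<phi> 1"
  have ij: "i < j" unfolding i_def j_def using \<phi>(1) by (simp add: strict_mono_def)
  have Ole: "Oc i s \<le> Oc j s" for s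
    using \<phi>(2) Osupp unfolding i_def j_def by (cases "s \<in> species N") auto
  obtain D where D: "D \<in> natvec d"
    "int (f (\<lambda>k. a i k + D k)) - int (f (a i)) > int (f (\<lambda>k. a j k + D k)) - int (f (a j))"
    using assms(3) ij by blast
  define ID where "ID = (\<lambda>s. \<Sum>k<d. if s = inp N k then D k else 0)"
  have IDY: "ID ?Y = 0" using wf unfolding ID_def wf_crn_def by (auto intro!: sum.neutral)
  have initadd: "?I (\<lambda>k. x k + D k) = (\<lambda>s. ?I x s + ID s)" for x
  proof
    fix s
    have "(\<Sum>k<d. if s = inp N k then x k + D k else 0) =
      (\<Sum>k<d. (if s = inp N k then x k else 0) + (if s = inp N k then D k else 0))"
      by (rule sum.cong) auto
    then show "?I (\<lambda>k. x k + D k) s = ?I x s + ID s"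
      unfolding init_config_def ID_def by (simp add: sum.distrib)
  qed
  have nv: "(\<lambda>k. a m k + D k) \<in> natvec d" for m
    using assms(1) D(1) unfolding natvec_def by auto
  have ri: "reachable N (?I (\<lambda>k. a i k + D k)) (\<lambda>s. Oc i s + ID s)"
    unfolding initadd using reach_add[OF Oc(1)] .
  then obtain Ei where Ei: "reachable N (\<lambda>s. Oc i s + ID s) Ei" "Ei ?Y = f (\<lambda>k. a i k + D k)"
    using sc nv unfolding stably_computes_def by blast
  have sh: "reachable N (\<lambda>s. if s = ?Y then Oc j ?Y else Oc i s + ID s + (Oc j s - Oc i s))
      (\<lambda>s. if s = ?Y then Oc j ?Y + (Ei ?Y - (Oc i ?Y + ID ?Y)) else Ei s + (Oc j s - Oc i s))"
    and geq: "Oc i ?Y + ID ?Y \<le> Ei ?Y"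
    using shift[OF oo Ei(1), of "Oc j ?Y" "\<lambda>s. Oc j s - Oc i s"] by auto
  have st: "(\<lambda>s. if s = ?Y then Oc j ?Y else Oc i s + ID s + (Oc j s - Oc i s)) = (\<lambda>s. Oc j s + ID s)"
    using Ole IDY by (auto intro!: ext)
  define G where "G = (\<lambda>s. if s = ?Y then Oc j ?Y + (Ei ?Y - (Oc i ?Y + ID ?Y)) else Ei s + (Oc j s - Oc i s))"
  have rj: "reachable N (?I (\<lambda>k. a j k + D k)) G"
  proof -
    have r1: "reachable N (?I (\<lambda>k. a j k + D k)) (\<lambda>s. Oc j s + ID s)"
      unfolding initadd by (rule reach_add[OF Oc(1)])
    have r2: "reachable N (\<lambda>s. Oc j s + ID s) G"
      using sh unfolding st G_def .
    show ?thesis using r1 r2 unfolding reachable_def by (rule rtranclp_trans)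
  qed
  then obtain Ej where Ej: "reachable N G Ej" "Ej ?Y = f (\<lambda>k. a j k + D k)"
    using sc nv unfolding stably_computes_def by blast
  have "G ?Y \<le> Ej ?Y" using mono_Y[OF oo Ej(1)] .
  then have "f (a j) + (f (\<lambda>k. a i k + D k) - f (a i)) \<le> f (\<lambda>k. a j k + D k)"
    using Ej(2) Ei(2) Oc(2) IDY unfolding G_def by simp
  moreover have "f (a i) \<le> f (\<lambda>k. a i k + D k)" using geq Ei(2) Oc(2) IDY by simp
  ultimately show False by (rule arith_aux[OF _ _ D(2)])
qed

end
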